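(* It holds that $$\mathrm{cl}\,\mathrm{conv}(P^B\setminus C)=\mathrm{cl}\,\mathrm{conv}(P^B\setminus T^C)=\mathrm{cl}\,\mathrm{conv}(P^B\setminus R^C).$$
   Context: Let $A\in\mathbb{R}^{m\times n}$ have full row rank, $b\in\mathbb{R}^m$, and $P=\{x\in\mathbb{R}^n_+ : Ax=b\}$. Let $C\subseteq\mathbb{R}^n$ be an open convex set. Fix a basis $B$ of $P$ with nonbasic set $N=\{1,\dots,n\}\setminus B$. Write $P=\{x: x_i=\bar b_i-\sum_{j\in N}\bar a_{ij}x_j\ (i\in B),\ x_j\ge0\ (j=1,\dots,n)\}$ with $\bar b\ge0$. The basic solution $\bar x$ has $\bar x_i=\bar b_i$ ($i\in B$) and $\bar x_i=0$ ($i\in N$). $P^B$ is obtained by dropping $x_i\ge0$ for $i\in B$. For $j\in N$, $\bar r^j$ has $\bar r^j_k=-\bar a_{kj}$ ($k\in B$), $\bar r^j_j=1$, and $\bar r^j_k=0$ otherwise. Thus $P^B=\{\bar x+\sum_{j\in N}x_j\bar r^j:x_j\ge0\}$. It is assumed that $\bar x\notin\mathrm{cl}(C)$. For $j\in N$, $\alpha_j=\inf\{\lambda\ge0:\bar x+\lambda\bar r^j\in C\}$ and $\beta_j=\sup\{\lambda\ge0:\bar x+\lambda\bar r^j\in C\}$, with $\alpha_j=+\infty$, $\beta_j=-\infty$ if that halfline misses $C$. The set $N$ is partitioned into - $N_0=\{j:\alpha_j=+\infty,\beta_j=-\infty\}$, - $N_1=\{j:\alpha_j\in(0,\infty),\beta_j=+\infty\}$,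 - $N_2=\{j:\alpha_j\in(0,\infty),\beta_j\in(\alpha_j,\infty)\}$. For a set $K$, $\mathrm{recc}(K)=\{d:x+\lambda d\in K\ \forall x\in K,\lambda\ge0\}$. Define - $T=\{\bar x\}+\mathrm{conv}\big(\bigcup_{j\in N_1\cup N_2}\{\lambda\bar r^j:\alpha_j<\lambda<\beta_j\}\big)$ and $T^C=T+\mathrm{recc}(C)$; - $R=\{\bar x\}+\mathrm{conv}\big(\bigcup_{j\in N_1}\{\lambda\bar r^j:\alpha_j<\lambda<\beta_j\}\big)$ and $R^C=R+\mathrm{recc}(C)$. Here $\mathrm{cl}\,\mathrm{conv}$ denotes the closure of the convex hull. *)

theory Defs
  imports "HOL-Analysis.Analysis" "HOL-Library.Extended_Real"
begin

text \<open>Setting: A is an m x n real matrix (index types 'm, 'n), b in R^m,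
P = {x >= 0. A x = b}. A basis B is a set of column indices with
|B| = m and linearly independent columns; it is a (feasible) basis of P
when the associated basic solution is nonnegative.\<close>

definition is_basis :: "real^'n^'m \<Rightarrow> 'n set \<Rightarrow> bool" where
  "is_basis A B \<longleftrightarrow> card B = CARD('m) \<and> inj_on (\<lambda>j. column j A) B
      \<and> independent ((\<lambda>j. column j A) ` B)"

definition basic_sol :: "real^'n^'m \<Rightarrow> real^'m \<Rightarrow> 'n set \<Rightarrow> real^'n" where
  "basic_sol A b B = (THE x. A *v x = b \<and> (\<forall>i. i \<notin> B \<longrightarrow> x $ i = 0))"

text \<open>Ray r^j (j nonbasic): r_j = 1, r_k = 0 for other nonbasic k, and
the basic components determined by A r = 0, i.e. r_k = - abar_kj.\<close>
definition ray :: "real^'n^'m \<Rightarrow> 'n set \<Rightarrow> 'n \<Rightarrow> real^'n" where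
  "ray A B j = (THE r. A *v r = 0 \<and> r $ j = 1 \<and> (\<forall>k. k \<notin> B \<and> k \<noteq> j \<longrightarrow> r $ k = 0))"

text \<open>P^B: drop the nonnegativity of the basic variables.\<close>
definition PB :: "real^'n^'m \<Rightarrow> real^'m \<Rightarrow> 'n set \<Rightarrow> (real^'n) set" where
  "PB A b B = {x. A *v x = b \<and> (\<forall>j. j \<notin> B \<longrightarrow> 0 \<le> x $ j)}"

definition recc :: "('a::real_vector) set \<Rightarrow> 'a set" where
  "recc K = {d. \<forall>x\<in>K. \<forall>s::real. s \<ge> 0 \<longrightarrow> x + s *\<^sub>R d \<in> K}"

text \<open>alpha_j = inf, beta_j = sup of {lambda >= 0. xbar + lambda r^j in C}, as extended
reals, so that alpha_j = +infinity and beta_j = -infinity for the empty set.\<close>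
definition alpha :: "real^'n^'m \<Rightarrow> real^'m \<Rightarrow> 'n set \<Rightarrow> (real^'n) set \<Rightarrow> 'n \<Rightarrow> ereal" where
  "alpha A b B C j = Inf (ereal ` {s. s \<ge> 0 \<and> basic_sol A b B + s *\<^sub>R ray A B j \<in> C})"

definition beta :: "real^'n^'m \<Rightarrow> real^'m \<Rightarrow> 'n set \<Rightarrow> (real^'n) set \<Rightarrow> 'n \<Rightarrow> ereal" where
  "beta A b B C j = Sup (ereal ` {s. s \<ge> 0 \<and> basic_sol A b B + s *\<^sub>R ray A B j \<in> C})"

definition N1 :: "real^'n^'m \<Rightarrow> real^'m \<Rightarrow> 'n set \<Rightarrow> (real^'n) set \<Rightarrow> 'n set" where
  "N1 A b B C = {j. j \<notin> B \<and> 0 < alpha A b B C j \<and> alpha A b B C j < \<infinity>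
                    \<and> beta A b B C j = \<infinity>}"

definition N2 :: "real^'n^'m \<Rightarrow> real^'m \<Rightarrow> 'n set \<Rightarrow> (real^'n) set \<Rightarrow> 'n set" where
  "N2 A b B C = {j. j \<notin> B \<and> 0 < alpha A b B C j \<and> alpha A b B C j < \<infinity>
                    \<and> alpha A b B C j < beta A b B C j \<and> beta A b B C j < \<infinity>}"

definition hullset :: "real^'n^'m \<Rightarrow> real^'m \<Rightarrow> 'n set \<Rightarrow> (real^'n) set \<Rightarrow> 'n set \<Rightarrow> (real^'n) set" where
  "hullset A b B C J = (\<lambda>y. basic_sol A b B + y) ` (convex hull
      (\<Union>j\<in>J. {s *\<^sub>R ray A B j | s. alpha A b B C j < ereal s \<and> ereal s < beta A b B C j}))"

definition Tset where "Tset A b B C = hullset A b B C (N1 A b B C \<union> N2 A b B C)"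
definition Rset where "Rset A b B C = hullset A b B C (N1 A b B C)"

definition TC where "TC A b B C = {t + d | t d. t \<in> Tset A b B C \<and> d \<in> recc C}"
definition RC where "RC A b B C = {t + d | t d. t \<in> Rset A b B C \<and> d \<in> recc C}"

end

theory Submission
  imports Defs
begin


lemma basis_uniq0:
  fixes A :: "real^'n^'m"
  assumes "is_basis A B" "A *v v = 0" "\<forall>i. i \<notin> B \<longrightarrow> v $ i = 0"
  shows "v = 0"
proof -
  let ?c = "\<lambda>j. column j A"
  have inj: "inj_on ?c B" and ind: "independent (?c ` B)" using assms(1) by (auto simp: is_basis_def)
  have "A *v v = (\<Sum>i\<in>UNIV. v$i *\<^sub>R ?c i)" by (simp add: matrix_mult_sum scalar_mult_eq_scaleR)
  also have "\<dots> = (\<Sum>i\<in>B. v$i *\<^sub>R ?c i)"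
    using assms(3) by (intro sum.mono_neutral_right) auto
  also have "\<dots> = (\<Sum>w\<in>?c ` B. v $ (inv_into B ?c w) *\<^sub>R w)"
    using inj by (simp add: sum.reindex) (intro sum.cong refl, simp add: inv_into_f_f[OF inj])
  finally have s0: "(\<Sum>w\<in>?c ` B. v $ (inv_into B ?c w) *\<^sub>R w) = 0" using assms(2) by simp
  have "v $ i = 0" for i
  proof (cases "i \<in> B")
    case True
    from ind[unfolded independent_explicit] have "\<forall>w\<in>?c ` B. v $ (inv_into B ?c w) = 0"
      using s0 by (elim conjE allE[of _ "\<lambda>w. v $ (inv_into B ?c w)"]) auto
    then show ?thesis using True by (simp add: inv_into_f_f[OF inj])
  next
    case False then show ?thesis using assms(3) by auto
  qed
  then show ?thesis by (simp add: vec_eq_iff)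
qed

lemma basis_exists:
  fixes A :: "real^'n^'m"
  assumes "is_basis A B"
  shows "\<exists>v. A *v v = w \<and> (\<forall>i. i \<notin> B \<longrightarrow> v $ i = 0)"
proof -
  let ?c = "\<lambda>j. column j A"
  have inj: "inj_on ?c B" and ind: "independent (?c ` B)" and cd: "card B = CARD('m)"
    using assms(1) by (auto simp: is_basis_def)
  have "dim (UNIV :: (real^'m) set) \<le> card (?c ` B)"
    using cd inj by (simp add: card_image)
  then have "UNIV \<subseteq> span (?c ` B)"
    using card_ge_dim_independent[OF _ ind] by blast
  then have "w \<in> span (?c ` B)" by blast
  then obtain u where u: "w = (\<Sum>z\<in>?c ` B. u z *\<^sub>R z)"
    using span_finite[of "?c ` B"] by auto
  define v where "v = (\<chi> i. if i \<in> B then u (?c i) else 0)"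
  have "A *v v = (\<Sum>i\<in>UNIV. v$i *\<^sub>R ?c i)" by (simp add: matrix_mult_sum scalar_mult_eq_scaleR)
  also have "\<dots> = (\<Sum>i\<in>B. v$i *\<^sub>R ?c i)"
    by (intro sum.mono_neutral_right) (auto simp: v_def)
  also have "\<dots> = (\<Sum>i\<in>B. u (?c i) *\<^sub>R ?c i)" by (auto simp: v_def)
  also have "\<dots> = w" using u inj by (simp add: sum.reindex)
  finally show ?thesis by (auto simp: v_def)
qed

lemma basic_sol_prop:
  fixes A :: "real^'n^'m"
  assumes "is_basis A B"
  shows "A *v basic_sol A b B = b \<and> (\<forall>i. i \<notin> B \<longrightarrow> basic_sol A b B $ i = 0)"
proof -
  obtain v where v: "A *v v = b \<and> (\<forall>i. i \<notin> B \<longrightarrow> v $ i = 0)" using basis_exists[OF assms] by blast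
  have uq: "A *v y = b \<and> (\<forall>i. i \<notin> B \<longrightarrow> y $ i = 0) \<Longrightarrow> y = v" for y
    using basis_uniq0[OF assms, of "y - v"] v by (auto simp: matrix_vector_mult_diff_distrib)
  have "basic_sol A b B = v" unfolding basic_sol_def by (rule the_equality, rule v, erule uq)
  then show ?thesis using v by simp
qed

lemma ray_prop:
  fixes A :: "real^'n^'m"
  assumes "is_basis A B" "j \<notin> B"
  shows "A *v ray A B j = 0 \<and> ray A B j $ j = 1 \<and> (\<forall>k. k \<notin> B \<and> k \<noteq> j \<longrightarrow> ray A B j $ k = 0)"
proof -
  obtain v where v: "A *v v = - column j A \<and> (\<forall>i. i \<notin> B \<longrightarrow> v $ i = 0)" using basis_exists[OF assms(1)] by blast
  define r where "r = v + axis j 1"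
  have Aax: "A *v axis j 1 = column j A"
    by (rule matrix_vector_mult_basis)
  have r: "A *v r = 0 \<and> r $ j = 1 \<and> (\<forall>k. k \<notin> B \<and> k \<noteq> j \<longrightarrow> r $ k = 0)"
  proof -
    have "A *v r = 0" using conjunct1[OF v] unfolding r_def by (simp add: matrix_vector_right_distrib Aax)
    moreover have "r $ j = 1 \<and> (\<forall>k. k \<notin> B \<and> k \<noteq> j \<longrightarrow> r $ k = 0)"
      using conjunct2[OF v] assms(2) unfolding r_def by (simp add: axis_def)
    ultimately show ?thesis by blast
  qed
  have uq: "y = r" if h: "A *v y = 0 \<and> y $ j = 1 \<and> (\<forall>k. k \<notin> B \<and> k \<noteq> j \<longrightarrow> y $ k = 0)" for y
  proof -
    have "(y - r) $ i = 0" if "i \<notin> B" for i using h r that by (cases "i = j") auto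
    moreover have "A *v (y - r) = 0" using h r by (simp add: matrix_vector_mult_diff_distrib)
    ultimately have "y - r = 0" using basis_uniq0[OF assms(1), of "y - r"] by blast
    then show ?thesis by simp
  qed
  have "ray A B j = r" unfolding ray_def by (rule the_equality, rule r, erule uq)
  then show ?thesis using r by simp
qed



lemma ray_nonbasic:
  fixes A :: "real^'n^'m"
  assumes "is_basis A B" "j \<notin> B" "k \<notin> B"
    and rp: "\<And>j. j \<notin> B \<Longrightarrow> A *v ray A B j = 0 \<and> ray A B j $ j = 1 \<and> (\<forall>k. k \<notin> B \<and> k \<noteq> j \<longrightarrow> ray A B j $ k = 0)"
  shows "ray A B j $ k = (if k = j then 1 else 0)"
  using rp[OF assms(2)] assms(3) by auto

lemma Amul_sum_rays:
  fixes A :: "real^'n^'m"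
  assumes "S \<subseteq> - B"
    and rp: "\<And>j. j \<notin> B \<Longrightarrow> A *v ray A B j = 0"
  shows "A *v (\<Sum>j\<in>S. c j *\<^sub>R ray A B j) = 0"
proof -
  have "finite S" by simp
  then show ?thesis using assms(1)
  proof (induction S rule: finite_induct)
    case empty then show ?case by simp
  next
    case (insert x F) then show ?case
      by (simp add: matrix_vector_right_distrib matrix_vector_mult_scaleR rp)
  qed
qed

lemma sum_rays_comp:
  fixes A :: "real^'n^'m"
  assumes "S \<subseteq> - B" "k \<notin> B"
    and rn: "\<And>j k. j \<notin> B \<Longrightarrow> k \<notin> B \<Longrightarrow> ray A B j $ k = (if k = j then 1 else 0)"
  shows "(\<Sum>j\<in>S. c j *\<^sub>R ray A B j) $ k = (if k \<in> S then c k else 0)"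
proof -
  have "(\<Sum>j\<in>S. c j *\<^sub>R ray A B j) $ k = (\<Sum>j\<in>S. (c j *\<^sub>R ray A B j) $ k)" by simp
  also have "\<dots> = (\<Sum>j\<in>S. if k = j then c k else 0)"
    by (intro sum.cong refl) (use assms in \<open>auto simp: rn\<close>)
  also have "\<dots> = (if k \<in> S then c k else 0)" by (simp add: sum.delta)
  finally show ?thesis .
qed

lemma seg_in_C:
  assumes "convex C" "alpha A b B C j < ereal s" "ereal s < beta A b B C j"
  shows "basic_sol A b B + s *\<^sub>R ray A B j \<in> C"
proof -
  let ?xb = "basic_sol A b B" and ?r = "ray A B j"
  let ?I = "{s. s \<ge> 0 \<and> ?xb + s *\<^sub>R ?r \<in> C}"
  from assms(2) obtain s1 where s1: "s1 \<in> ?I" "ereal s1 < ereal s" unfolding alpha_def by (auto simp: Inf_less_iff)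
  from assms(3) obtain s2 where s2: "s2 \<in> ?I" "ereal s < ereal s2" unfolding beta_def by (auto simp: less_Sup_iff)
  have lt: "s1 < s" "s < s2" using s1 s2 by auto
  define t where "t = (s - s1) / (s2 - s1)"
  have t: "0 \<le> t" "t \<le> 1" using lt by (auto simp: t_def field_simps)
  have "(1 - t) *\<^sub>R (?xb + s1 *\<^sub>R ?r) + t *\<^sub>R (?xb + s2 *\<^sub>R ?r) \<in> C"
    using s1 s2 t assms(1) by (intro convexD) auto
  moreover have "(1 - t) *\<^sub>R (?xb + s1 *\<^sub>R ?r) + t *\<^sub>R (?xb + s2 *\<^sub>R ?r) = ?xb + s *\<^sub>R ?r"
  proof -
    have d: "t * (s2 - s1) = s - s1" using lt by (simp add: t_def)
    have "(1 - t) * s1 + t * s2 = s1 + t * (s2 - s1)" by (simp add: algebra_simps)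
    with d have e: "(1 - t) * s1 + t * s2 = s" by simp
    have "(1 - t) *\<^sub>R (?xb + s1 *\<^sub>R ?r) + t *\<^sub>R (?xb + s2 *\<^sub>R ?r) = ?xb + ((1 - t) * s1 + t * s2) *\<^sub>R ?r"
      by (simp add: algebra_simps)
    then show ?thesis by (simp only: e)
  qed
  ultimately show ?thesis by simp
qed

lemma hullset_sub:
  assumes "convex C"
  shows "hullset A b B C J \<subseteq> C"
proof -
  let ?xb = "basic_sol A b B"
  let ?S = "(\<Union>j\<in>J. {s *\<^sub>R ray A B j | s. alpha A b B C j < ereal s \<and> ereal s < beta A b B C j})"
  have cv: "convex {y. ?xb + y \<in> C}"
    unfolding convex_def
  proof safe
    fix x y :: "real^'a" and u v :: real
    assume h: "?xb + x \<in> C" "?xb + y \<in> C" "0 \<le> u" "0 \<le> v" "u + v = 1"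
    then have "u *\<^sub>R (?xb + x) + v *\<^sub>R (?xb + y) \<in> C" using assms by (intro convexD) auto
    moreover have "u *\<^sub>R (?xb + x) + v *\<^sub>R (?xb + y) = (u + v) *\<^sub>R ?xb + (u *\<^sub>R x + v *\<^sub>R y)"
      by (simp add: algebra_simps)
    ultimately show "?xb + (u *\<^sub>R x + v *\<^sub>R y) \<in> C" using h(5) by simp
  qed
  have "?S \<subseteq> {y. ?xb + y \<in> C}" using seg_in_C[OF assms] by auto
  then have "convex hull ?S \<subseteq> {y. ?xb + y \<in> C}" by (rule hull_minimal) (rule cv)
  then show ?thesis unfolding hullset_def by auto
qed

lemma TC_sub: assumes "convex C" shows "TC A b B C \<subseteq> C"
proof
  fix x assume "x \<in> TC A b B C"
  then obtain t d where x: "x = t + d" "t \<in> Tset A b B C" "d \<in> recc C" unfolding TC_def by auto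
  have "t \<in> C" using x(2) hullset_sub[OF assms, of A b B "N1 A b B C \<union> N2 A b B C"] unfolding Tset_def by blast
  then have "t + 1 *\<^sub>R d \<in> C" using x(3) zero_le_one unfolding recc_def by blast
  then show "x \<in> C" using x by simp
qed

lemma RC_sub: "RC A b B C \<subseteq> TC A b B C"
proof -
  have "Rset A b B C \<subseteq> Tset A b B C"
    unfolding Rset_def Tset_def hullset_def by (intro image_mono hull_mono) auto
  then show ?thesis unfolding RC_def TC_def by blast
qed

lemma recc_open:
  fixes C :: "'a::real_normed_vector set"
  assumes "open C" "convex C" "\<And>t. t \<ge> 0 \<Longrightarrow> p + t *\<^sub>R d \<in> C"
  shows "d \<in> recc C"
  unfolding recc_def
proof (intro CollectI ballI allI impI)
  fix z s assume z: "z \<in> C" and s: "(0::real) \<le> s"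
  obtain e where e: "e > 0" "ball z e \<subseteq> C" using assms(1) z open_contains_ball by blast
  define n where "n = norm (z - p)"
  define ep where "ep = e / (2*e + 2*n)"
  have n0: "n \<ge> 0" by (simp add: n_def)
  have ep: "0 < ep" "ep < 1" using e n0 by (auto simp: ep_def field_simps)
  define z' where "z' = (1/(1-ep)) *\<^sub>R (z - ep *\<^sub>R p)"
  have z'1: "(1 - ep) *\<^sub>R z' = z - ep *\<^sub>R p" using ep by (simp add: z'_def)
  have "z' - z = (1/(1-ep)) *\<^sub>R ((1 - ep) *\<^sub>R z' - (1 - ep) *\<^sub>R z)"
    using ep by (simp add: scaleR_right_diff_distrib)
  also have "\<dots> = (1/(1-ep)) *\<^sub>R (ep *\<^sub>R (z - p))"
    by (simp only: z'1) (simp add: algebra_simps)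
  finally have "norm (z' - z) = (ep / (1 - ep)) * n" using ep by (simp add: n_def)
  also have "\<dots> < e"
  proof -
    have p: "0 < 2*e+2*n" using e n0 by simp
    have k: "ep * (n + e) < e" unfolding ep_def using e n0 p by (simp add: pos_divide_less_eq)
    have p2: "0 < 1 - ep" using ep by simp
    have "ep * n < e * (1 - ep)" using k by (simp add: algebra_simps)
    then show ?thesis using p2 by (simp add: pos_divide_less_eq)
  qed
  finally have "z' \<in> ball z e" by (simp add: dist_norm norm_minus_commute)
  then have z'C: "z' \<in> C" using e by blast
  have pC: "p + (s / ep) *\<^sub>R d \<in> C" using assms(3) s ep by simp
  have "(1 - ep) *\<^sub>R z' + ep *\<^sub>R (p + (s / ep) *\<^sub>R d) \<in> C"
    using z'C pC ep assms(2) by (intro convexD) auto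
  moreover have "(1 - ep) *\<^sub>R z' + ep *\<^sub>R (p + (s / ep) *\<^sub>R d) = z + s *\<^sub>R d"
  proof -
    have "ep *\<^sub>R (p + (s / ep) *\<^sub>R d) = ep *\<^sub>R p + s *\<^sub>R d" using ep by (simp add: scaleR_right_distrib)
    then show ?thesis by (simp only: z'1) (simp add: algebra_simps)
  qed
  ultimately show "z + s *\<^sub>R d \<in> C" by simp
qed



lemma hard:
  fixes A :: "real^'n^'m" and b :: "real^'m" and B :: "'n set" and C :: "(real^'n) set"
  assumes basis: "is_basis A B" and oC: "open C" and cC: "convex C"
    and xbC: "basic_sol A b B \<notin> closure C"
    and xP: "x \<in> PB A b B" and xR: "x \<notin> RC A b B C"
  shows "x \<in> closure (convex hull (PB A b B - C))"
proof (rule ccontr)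
  let ?D = "closure (convex hull (PB A b B - C))"
  let ?xb = "basic_sol A b B"
  let ?r = "ray A B"
  let ?N = "- B"
  assume xD: "x \<notin> ?D"
  obtain a c where ac: "inner a x < c" "\<forall>y\<in>?D. inner a y > c"
    using separating_hyperplane_closed_point[OF _ _ xD] by (meson closed_closure convex_closure convex_convex_hull)
  have sub: "PB A b B - C \<subseteq> ?D" by (meson closure_subset hull_subset subset_trans)
  have HK: "y \<in> C" if "y \<in> PB A b B" "inner a y \<le> c" for y
    using that sub ac(2) by force
  have xbp: "A *v ?xb = b" "\<And>i. i \<notin> B \<Longrightarrow> ?xb $ i = 0" using basic_sol_prop[OF basis] by auto
  have rp: "\<And>j. j \<notin> B \<Longrightarrow> A *v ?r j = 0 \<and> ?r j $ j = 1 \<and> (\<forall>k. k \<notin> B \<and> k \<noteq> j \<longrightarrow> ?r j $ k = 0)"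
    using ray_prop[OF basis] by blast
  have ArA: "\<And>j. j \<notin> B \<Longrightarrow> A *v ?r j = 0" using rp by blast
  have rn: "\<And>j k. j \<notin> B \<Longrightarrow> k \<notin> B \<Longrightarrow> ?r j $ k = (if k = j then 1 else 0)"
    using ray_nonbasic[OF basis _ _ rp] by blast
  have xbPB: "?xb \<in> PB A b B" using xbp by (simp add: PB_def)
  have xbnC: "?xb \<notin> C" using xbC closure_subset by blast
  have axb: "inner a ?xb > c" using xbPB xbnC sub ac(2) by blast
  have PBray: "?xb + s *\<^sub>R ?r j \<in> PB A b B" if "j \<notin> B" "s \<ge> 0" for j s
    using xbp ArA[OF that(1)] that by (auto simp: PB_def matrix_vector_right_distrib matrix_vector_mult_scaleR rn)
  have xrep: "x = ?xb + (\<Sum>j\<in>?N. x $ j *\<^sub>R ?r j)"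
  proof -
    let ?v = "x - ?xb - (\<Sum>j\<in>?N. x $ j *\<^sub>R ?r j)"
    have "A *v ?v = 0" using xP xbp Amul_sum_rays[OF _ ArA, of ?N "\<lambda>j. x $ j"]
      by (simp add: PB_def matrix_vector_mult_diff_distrib)
    moreover have "\<forall>i. i \<notin> B \<longrightarrow> ?v $ i = 0" using xbp sum_rays_comp[OF _ _ rn, of ?N] by simp
    ultimately have v0: "?v = 0" using basis_uniq0[OF basis] by blast
    have "x = ?v + (?xb + (\<Sum>j\<in>?N. x $ j *\<^sub>R ?r j))" by simp
    then show ?thesis using v0 by simp
  qed
  have xnn: "\<And>j. j \<notin> B \<Longrightarrow> x $ j \<ge> 0" using xP by (simp add: PB_def)
  define g where "g j = inner a (?r j)" for j
  define c' where "c' = c - inner a ?xb"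
  have c'neg: "c' < 0" using axb by (simp add: c'_def)
  have gx: "inner a x = inner a ?xb + (\<Sum>j\<in>?N. x $ j * g j)"
  proof -
    have "inner a x = inner a (?xb + (\<Sum>j\<in>?N. x $ j *\<^sub>R ?r j))"
      by (rule arg_cong[where f="inner a"]) (rule xrep)
    also have "\<dots> = inner a ?xb + (\<Sum>j\<in>?N. x $ j * g j)"
      by (simp add: inner_add_right inner_sum_right g_def)
    finally show ?thesis .
  qed
  have key: "j \<in> N1 A b B C \<and> 0 < real_of_ereal (alpha A b B C j)
      \<and> alpha A b B C j = ereal (real_of_ereal (alpha A b B C j))
      \<and> real_of_ereal (alpha A b B C j) * g j \<ge> c'" if j: "j \<notin> B" "g j < 0" for j
  proof -
    let ?I = "{s. s \<ge> 0 \<and> ?xb + s *\<^sub>R ?r j \<in> C}"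
    define s0 where "s0 = c' / g j"
    have s0: "s0 > 0" using c'neg j by (simp add: s0_def divide_neg_neg)
    have inI: "s \<in> ?I" if "s \<ge> s0" for s
    proof -
      have "s * g j \<le> s0 * g j" using that j(2) by (simp add: mult_right_mono_neg)
      also have "s0 * g j = c'" using j(2) by (simp add: s0_def)
      finally have "inner a (?xb + s *\<^sub>R ?r j) \<le> c" by (simp add: inner_add_right g_def c'_def)
      moreover have "s \<ge> 0" using s0 that by simp
      ultimately show ?thesis using HK PBray[OF j(1)] by auto
    qed
    have beta: "beta A b B C j = \<infinity>"
      unfolding beta_def
    proof (rule ereal_top)
      fix M :: real
      have "max M s0 \<in> ?I" using inI by simp
      then have "ereal (max M s0) \<in> ereal ` ?I" by (rule imageI)
      then have "ereal (max M s0) \<le> Sup (ereal ` ?I)" by (rule Sup_upper)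
      then show "ereal M \<le> Sup (ereal ` ?I)" by (rule order_trans[rotated]) simp
    qed
    have al_le: "alpha A b B C j \<le> ereal s0" unfolding alpha_def using inI[of s0] by (intro Inf_lower) auto
    have al_ge: "alpha A b B C j \<ge> 0" unfolding alpha_def by (intro Inf_greatest) auto
    then obtain al where al: "alpha A b B C j = ereal al" using al_le by (cases "alpha A b B C j") auto
    have al0: "al \<ge> 0" "al \<le> s0" using al_le al_ge al by auto
    have alpos: "al > 0"
    proof (rule ccontr)
      assume "\<not> al > 0" then have al00: "al = 0" using al0 by simp
      have "?xb \<in> closure C" unfolding closure_approachable
      proof (intro allI impI)
        fix ep :: real assume ep: "ep > 0"
        define dl where "dl = ep / (norm (?r j) + 1)"
        have np: "0 < norm (?r j) + 1" by (simp add: add_nonneg_pos)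
        have dl: "dl > 0" using ep np by (simp add: dl_def)
        have "alpha A b B C j < ereal dl" using al al00 dl by simp
        then obtain s where s: "s \<in> ?I" "s < dl" unfolding alpha_def by (auto simp: Inf_less_iff)
        have "dist (?xb + s *\<^sub>R ?r j) ?xb = s * norm (?r j)" using s by (simp add: dist_norm)
        also have "\<dots> \<le> dl * norm (?r j)" using s by (simp add: mult_right_mono)
        also have "\<dots> < ep"
        proof -
          have "ep * norm (?r j) < ep * (norm (?r j) + 1)" using ep by simp
          then show ?thesis using np by (simp add: dl_def pos_divide_less_eq)
        qed
        finally show "\<exists>y\<in>C. dist y ?xb < ep" using s by blast
      qed
      then show False using xbC by simp
    qed
    have "al * g j \<ge> s0 * g j" using al0 j(2) by (simp add: mult_right_mono_neg)
    then have "al * g j \<ge> c'" using j(2) by (simp add: s0_def)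
    moreover have "j \<in> N1 A b B C" using j(1) al alpos beta by (simp add: N1_def)
    ultimately show ?thesis using al alpos by simp
  qed
  define J where "J = {j. j \<notin> B \<and> x $ j > 0 \<and> g j < 0}"
  define P where "P = - (\<Sum>j\<in>J. x $ j * g j)"
  define Q where "Q = (\<Sum>j\<in>?N - J. x $ j * g j)"
  have JN: "J \<subseteq> ?N" by (auto simp: J_def)
  have sumsplit: "(\<Sum>j\<in>?N. x $ j * g j) = - P + Q"
    using sum.subset_diff[OF JN, of "\<lambda>j. x $ j * g j"] by (simp add: P_def Q_def)
  have Q0: "Q \<ge> 0" unfolding Q_def
  proof (intro sum_nonneg)
    fix j assume j: "j \<in> ?N - J"
    then have xj: "x $ j \<ge> 0" using xnn by auto
    then have "x $ j = 0 \<or> g j \<ge> 0" using j by (auto simp: J_def)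
    note xj this
    then show "x $ j * g j \<ge> 0" by auto
  qed
  have "inner a x - inner a ?xb < c'" using ac(1) by (simp add: c'_def)
  then have PQ: "Q - P < c'" using gx sumsplit by simp
  have Ppos: "P > 0" using PQ Q0 c'neg by linarith
  have Jne: "J \<noteq> {}" using Ppos by (auto simp: P_def)
  define al where "al j = real_of_ereal (alpha A b B C j)" for j
  have al: "j \<in> N1 A b B C \<and> 0 < al j \<and> alpha A b B C j = ereal (al j) \<and> al j * g j \<ge> c'"
    if "j \<in> J" for j using key[of j] that by (simp add: J_def al_def)
  define th where "th = (P - Q) / P"
  have th: "0 < th" "th \<le> 1" using Ppos Q0 PQ c'neg by (auto simp: th_def field_simps)
  have thP: "th * P = P - Q" using Ppos by (simp add: th_def)
  define S where "S = (\<Sum>j\<in>J. th * x $ j / al j)"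
  have S1: "S > 1"
  proof -
    have "(\<Sum>j\<in>J. x $ j * g j / c') \<le> (\<Sum>j\<in>J. x $ j / al j)"
    proof (intro sum_mono)
      fix j assume j: "j \<in> J"
      have alj: "0 < al j" "al j * g j \<ge> c'" using al[OF j] by auto
      have xj: "x $ j > 0" using j by (simp add: J_def)
      have "g j / c' \<le> 1 / al j" using alj c'neg by (simp add: field_simps)
      then have "x $ j * (g j / c') \<le> x $ j * (1 / al j)" using xj by (intro mult_left_mono) auto
      then show "x $ j * g j / c' \<le> x $ j / al j" by simp
    qed
    also have "(\<Sum>j\<in>J. x $ j * g j / c') = P / (- c')" by (simp add: P_def sum_divide_distrib)
    finally have h: "P / (- c') \<le> (\<Sum>j\<in>J. x $ j / al j)" .
    have "S = th * (\<Sum>j\<in>J. x $ j / al j)" by (simp add: S_def sum_distrib_left)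
    moreover have "th * (P / (- c')) \<le> th * (\<Sum>j\<in>J. x $ j / al j)" using h th by (intro mult_left_mono) auto
    moreover have "th * (P / (- c')) = (P - Q) / (- c')" using thP by simp
    moreover have "(P - Q) / (- c') > 1"
    proof -
      have nc: "0 < - c'" using c'neg by simp
      show ?thesis using pos_less_divide_eq[OF nc, of 1 "P - Q"] PQ by linarith
    qed
    ultimately show ?thesis by linarith
  qed
  have Spos: "S > 0" using S1 by simp
  define y where "y = ?xb + (\<Sum>j\<in>J. (th * x $ j) *\<^sub>R ?r j)"
  have yR: "y \<in> Rset A b B C"
  proof -
    let ?U = "(\<Union>j\<in>N1 A b B C. {s *\<^sub>R ?r j | s. alpha A b B C j < ereal s \<and> ereal s < beta A b B C j})"
    define w where "w j = (th * x $ j / al j) / S" for j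
    define sj where "sj j = al j * S" for j
    have "(\<Sum>j\<in>J. w j *\<^sub>R (sj j *\<^sub>R ?r j)) \<in> convex hull ?U"
    proof (rule convex_sum)
      show "finite J" by simp
      show "convex (convex hull ?U)" by simp
      show "(\<Sum>j\<in>J. w j) = 1"
      proof -
        have "(\<Sum>j\<in>J. w j) = (\<Sum>j\<in>J. th * x $ j / al j) / S"
          unfolding w_def by (rule sum_divide_distrib[symmetric])
        also have "\<dots> = 1" using Spos by (simp only: S_def[symmetric]) simp
        finally show ?thesis .
      qed
      show "0 \<le> w j" if "j \<in> J" for j
        using al[OF that] th Spos that by (simp add: w_def J_def)
      show "sj j *\<^sub>R ?r j \<in> convex hull ?U" if j: "j \<in> J" for j
      proof (rule hull_inc)
        have N1: "j \<in> N1 A b B C" and alj: "0 < al j" "alpha A b B C j = ereal (al j)" using al[OF j] by auto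
        have "beta A b B C j = \<infinity>" using N1 by (simp add: N1_def)
        moreover have "al j < sj j" using alj S1 by (simp add: sj_def)
        ultimately have "sj j *\<^sub>R ?r j \<in> {s *\<^sub>R ?r j | s. alpha A b B C j < ereal s \<and> ereal s < beta A b B C j}"
          using alj by auto
        then show "sj j *\<^sub>R ?r j \<in> ?U" using N1 by (rule UN_I[rotated])
      qed
    qed
    moreover have "(\<Sum>j\<in>J. w j *\<^sub>R (sj j *\<^sub>R ?r j)) = (\<Sum>j\<in>J. (th * x $ j) *\<^sub>R ?r j)"
    proof (intro sum.cong refl)
      fix j assume j: "j \<in> J"
      have "0 < al j" using al[OF j] by simp
      then show "w j *\<^sub>R (sj j *\<^sub>R ?r j) = (th * x $ j) *\<^sub>R ?r j" using Spos by (simp add: w_def sj_def)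
    qed
    ultimately have "(\<Sum>j\<in>J. (th * x $ j) *\<^sub>R ?r j) \<in> convex hull ?U" by simp
    then show ?thesis unfolding Rset_def hullset_def y_def by (rule imageI)
  qed
  define d where "d = x - y"
  have Ad: "A *v d = 0" using xP xbp Amul_sum_rays[OF _ ArA, of J "\<lambda>j. th * x $ j"] JN
    by (simp add: PB_def d_def y_def matrix_vector_mult_diff_distrib matrix_vector_right_distrib)
  have dcomp: "d $ k \<ge> 0" if k: "k \<notin> B" for k
  proof -
    have "d $ k = x $ k - (if k \<in> J then th * x $ k else 0)"
      using sum_rays_comp[OF JN k rn, of "\<lambda>j. th * x $ j"] xbp(2)[OF k] by (simp add: d_def y_def)
    moreover have "x $ k - th * x $ k \<ge> 0"
    proof -
      have "x $ k - th * x $ k = (1 - th) * x $ k" by (simp add: algebra_simps)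
      moreover have "(1 - th) * x $ k \<ge> 0" using th xnn[OF k] by simp
      ultimately show ?thesis by simp
    qed
    ultimately show ?thesis using xnn[OF k] by auto
  qed
  have ad: "inner a d = 0"
  proof -
    have "inner a y = inner a ?xb + th * (\<Sum>j\<in>J. x $ j * g j)"
      by (simp add: y_def inner_add_right inner_sum_right g_def sum_distrib_left mult.assoc)
    then have "inner a d = (inner a x - inner a ?xb) - th * (- P)" by (simp add: d_def inner_diff_right P_def)
    also have "\<dots> = 0" using gx sumsplit thP by simp
    finally show ?thesis .
  qed
  have dR: "d \<in> recc C"
  proof (rule recc_open[OF oC cC, of x])
    fix t :: real assume t: "t \<ge> 0"
    have "x + t *\<^sub>R d \<in> PB A b B" using xP Ad dcomp t xnn
      by (auto simp: PB_def matrix_vector_right_distrib matrix_vector_mult_scaleR)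
    moreover have "inner a (x + t *\<^sub>R d) \<le> c" using ad ac(1) by (simp add: inner_add_right)
    ultimately show "x + t *\<^sub>R d \<in> C" by (rule HK)
  qed
  have "x = y + d" by (simp add: d_def)
  then have "x \<in> RC A b B C" using yR dR unfolding RC_def by blast
  with xR show False by simp
qed


theorem theorem2:
  fixes A :: "real^'n^'m" and b :: "real^'m" and B :: "'n set" and C :: "(real^'n) set"
  assumes "rank A = CARD('m)"
    and "open C" and "convex C"
    and "is_basis A B"
    and "\<forall>i. 0 \<le> basic_sol A b B $ i"
    and "basic_sol A b B \<notin> closure C"
  shows "closure (convex hull (PB A b B - C)) = closure (convex hull (PB A b B - TC A b B C))
       \<and> closure (convex hull (PB A b B - TC A b B C)) = closure (convex hull (PB A b B - RC A b B C))"
proof -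
  have TC: "TC A b B C \<subseteq> C" by (rule TC_sub[OF assms(3)])
  have RT: "RC A b B C \<subseteq> TC A b B C" by (rule RC_sub)
  have m: "closure (convex hull X) \<subseteq> closure (convex hull Y)" if "X \<subseteq> Y" for X Y :: "(real^'n) set"
    using that by (intro closure_mono hull_mono)
  have h1: "closure (convex hull (PB A b B - C)) \<subseteq> closure (convex hull (PB A b B - TC A b B C))"
    using TC by (intro m) blast
  have h2: "closure (convex hull (PB A b B - TC A b B C)) \<subseteq> closure (convex hull (PB A b B - RC A b B C))"
    using RT by (intro m) blast
  have h3: "closure (convex hull (PB A b B - RC A b B C)) \<subseteq> closure (convex hull (PB A b B - C))"
  proof -
    have "PB A b B - RC A b B C \<subseteq> closure (convex hull (PB A b B - C))"
      using hard[OF assms(4,2,3,6)] by blast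
    then have "convex hull (PB A b B - RC A b B C) \<subseteq> closure (convex hull (PB A b B - C))"
      by (rule hull_minimal) (simp add: convex_closure)
    then show ?thesis by (rule closure_minimal) simp
  qed
  from h1 h2 h3 show ?thesis by blast
qed

end
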